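(* Let $\gamma$ be an admissible path and let $t<s<t+\pi$ be in the domain of $\gamma$. Then the angle between the vector $\gamma'(t)$ and the ray from $\gamma(t)$ through $\gamma(s)$ is at most $\frac{s-t}{2}$.
   Context: An admissible path is a continuously differentiable planar curve $\gamma$ parameterized by arclength (so $\gamma'(t)$ is a unit tangent vector) such that for all $t<s<t+\pi$ in its domain, the angle $\alpha(s,t)$ between the directions $\gamma'(s)$ and $\gamma'(t)$ satisfies $\alpha(s,t)\le s-t$. *)

theory Defs
  imports "HOL-Analysis.Analysis"
begin

definition vec_angle :: "complex \<Rightarrow> complex \<Rightarrow> real" where
  "vec_angle u v = arccos ((u \<bullet> v) / (norm u * norm v))"

definition admissible :: "(real \<Rightarrow> complex) \<Rightarrow> real set \<Rightarrow> bool" where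
  "admissible \<gamma> I \<longleftrightarrow>
     is_interval I \<and>
     (\<forall>t\<in>I. \<gamma> differentiable (at t within I)) \<and>
     continuous_on I (\<lambda>t. vector_derivative \<gamma> (at t within I)) \<and>
     (\<forall>t\<in>I. norm (vector_derivative \<gamma> (at t within I)) = 1) \<and>
     (\<forall>t\<in>I. \<forall>s\<in>I. t < s \<and> s < t + pi \<longrightarrow>
        vec_angle (vector_derivative \<gamma> (at s within I))
                  (vector_derivative \<gamma> (at t within I)) \<le> s - t)"

end

theory Submission
  imports Defs
begin

lemma trig_aux:
  fixes z :: complex and a p :: real
  assumes n: "norm z = 1" and r: "Re z \<ge> cos a" and a0: "0 \<le> a" and ap: "a \<le> 2*p" and pp: "2*p < pi"
  shows "Im (z * cis (-p)) \<le> sin (a - p)" and "Im (z * cis p) \<ge> - sin (a - p)"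
proof -
  define q where "q = Arg z"
  have z0: "z \<noteq> 0" using n by auto
  have zq: "z = cis q" using cis_Arg[OF z0] n unfolding q_def by (simp add: sgn_div_norm)
  have qb: "- pi < q \<and> q \<le> pi" unfolding q_def by (rule Arg_bounded)
  have "cos \<bar>q\<bar> = Re z" using zq by (simp add: abs_if)
  hence "cos a \<le> cos \<bar>q\<bar>" using r by simp
  moreover have "cos a \<le> cos \<bar>q\<bar> \<longleftrightarrow> \<bar>q\<bar> \<le> a"
    by (rule cos_mono_le_eq) (use qb a0 ap pp in auto)
  ultimately have qa: "\<bar>q\<bar> \<le> a" by blast
  have p0: "0 \<le> p" using a0 ap by simp
  have qa1: "- a \<le> q" "q \<le> a" using qa by auto
  have "sin (a - p) - sin (q - p) = 2 * sin ((a - q) / 2) * cos ((a + q) / 2 - p)"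
    using sin_diff_sin[of "a - p" "q - p"] by (simp add: field_simps)
  also have "\<dots> \<ge> 0"
  proof -
    have "sin ((a - q) / 2) \<ge> 0" proof (rule sin_ge_zero)
      show "0 \<le> (a - q) / 2" using qa1 by (auto simp: field_simps)
      show "(a - q) / 2 \<le> pi" using qa1 ap pp by (auto simp: field_simps)
    qed
    moreover have "cos ((a + q) / 2 - p) \<ge> 0" proof (rule cos_ge_zero)
      show "- (pi/2) \<le> (a + q) / 2 - p" using qa1 ap pp by (auto simp: field_simps)
      show "(a + q) / 2 - p \<le> pi/2" using qa1 ap pp p0 by (auto simp: field_simps)
    qed
    ultimately show ?thesis by simp
  qed
  finally have 1: "sin (q - p) \<le> sin (a - p)" by simp
  have "sin (a - p) - sin (- q - p) = 2 * sin ((a + q) / 2) * cos ((a - q) / 2 - p)"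
    using sin_diff_sin[of "a - p" "- q - p"] by (simp add: field_simps)
  also have "\<dots> \<ge> 0"
  proof -
    have "sin ((a + q) / 2) \<ge> 0" proof (rule sin_ge_zero)
      show "0 \<le> (a + q) / 2" using qa1 by (auto simp: field_simps)
      show "(a + q) / 2 \<le> pi" using qa1 ap pp by (auto simp: field_simps)
    qed
    moreover have "cos ((a - q) / 2 - p) \<ge> 0" proof (rule cos_ge_zero)
      show "- (pi/2) \<le> (a - q) / 2 - p" using qa1 ap pp by (auto simp: field_simps)
      show "(a - q) / 2 - p \<le> pi/2" using qa1 ap pp p0 by (auto simp: field_simps)
    qed
    ultimately show ?thesis by simp
  qed
  finally have 2: "sin (- q - p) \<le> sin (a - p)" by simp
  have "Im (z * cis (-p)) = sin (q - p)" unfolding zq cis_mult by simp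
  thus "Im (z * cis (-p)) \<le> sin (a - p)" using 1 by simp
  have "Im (z * cis p) = sin (q + p)" unfolding zq cis_mult by simp
  moreover have "sin (- q - p) = - sin (q + p)" by (metis minus_diff_eq diff_minus_eq_add sin_minus add.commute)
  ultimately show "Im (z * cis p) \<ge> - sin (a - p)" using 2 by simp
qed


lemma integral_sin_shift:
  fixes t s p :: real
  assumes "t \<le> s" "s - t - p = p"
  shows "((\<lambda>u. sin (u - t - p)) has_integral 0) {t..s}"
proof -
  have "((\<lambda>u. sin (u - t - p)) has_integral ((\<lambda>u. - cos (u - t - p)) s - (\<lambda>u. - cos (u - t - p)) t)) {t..s}"
  proof (rule fundamental_theorem_of_calculus[OF assms(1)])
    fix x assume "x \<in> {t..s}"
    have "((\<lambda>u. - cos (u - t - p)) has_real_derivative sin (x - t - p)) (at x within {t..s})"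
      by (auto intro!: derivative_eq_intros)
    thus "((\<lambda>u. - cos (u - t - p)) has_vector_derivative sin (x - t - p)) (at x within {t..s})"
      by (simp add: has_real_derivative_iff_has_vector_derivative)
  qed
  moreover have "(\<lambda>u. - cos (u - t - p)) s - (\<lambda>u. - cos (u - t - p)) t = 0"
    using assms(2) by simp
  ultimately show ?thesis by simp
qed

lemma integral_cos_shift:
  fixes t s :: real
  assumes "t \<le> s"
  shows "((\<lambda>u. cos (u - t)) has_integral sin (s - t)) {t..s}"
proof -
  have "((\<lambda>u. cos (u - t)) has_integral ((\<lambda>u. sin (u - t)) s - (\<lambda>u. sin (u - t)) t)) {t..s}"
  proof (rule fundamental_theorem_of_calculus[OF assms(1)])
    fix x assume "x \<in> {t..s}"
    have "((\<lambda>u. sin (u - t)) has_real_derivative cos (x - t)) (at x within {t..s})"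
      by (auto intro!: derivative_eq_intros)
    thus "((\<lambda>u. sin (u - t)) has_vector_derivative cos (x - t)) (at x within {t..s})"
      by (simp add: has_real_derivative_iff_has_vector_derivative)
  qed
  thus ?thesis by simp
qed

lemma integral_Im_mult:
  assumes "(f has_integral y) S"
  shows "((\<lambda>u. Im (f u * c)) has_integral Im (y * c)) S"
proof -
  have "((\<lambda>u. f u * c) has_integral (y * c)) S" by (rule has_integral_mult_left[OF assms])
  from has_integral_linear[OF this bounded_linear_Im] show ?thesis by (simp add: o_def)
qed

lemma integral_Re_mult:
  assumes "(f has_integral y) S"
  shows "((\<lambda>u. Re (f u * c)) has_integral Re (y * c)) S"
proof -
  have "((\<lambda>u. f u * c) has_integral (y * c)) S" by (rule has_integral_mult_left[OF assms])
  from has_integral_linear[OF this bounded_linear_Re] show ?thesis by (simp add: o_def)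
qed

theorem lemma16:
  fixes \<gamma> :: "real \<Rightarrow> complex" and I :: "real set" and s t :: real
  assumes "admissible \<gamma> I" and "t \<in> I" and "s \<in> I" and "t < s" and "s < t + pi"
  shows "vec_angle (vector_derivative \<gamma> (at t within I)) (\<gamma> s - \<gamma> t) \<le> (s - t) / 2"
proof -
  define D where "D u = vector_derivative \<gamma> (at u within I)" for u
  have adm0: "is_interval I \<and>
     (\<forall>t\<in>I. \<gamma> differentiable (at t within I)) \<and>
     continuous_on I D \<and>
     (\<forall>t\<in>I. norm (D t) = 1) \<and>
     (\<forall>t\<in>I. \<forall>s\<in>I. t < s \<and> s < t + pi \<longrightarrow> vec_angle (D s) (D t) \<le> s - t)"
    using assms(1) unfolding admissible_def D_def by simp
  then have ivl: "is_interval I" and dif: "\<And>t. t \<in> I \<Longrightarrow> \<gamma> differentiable (at t within I)"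
    and nrm: "\<And>t. t \<in> I \<Longrightarrow> norm (D t) = 1"
    and ang: "\<And>t s. t \<in> I \<Longrightarrow> s \<in> I \<Longrightarrow> t < s \<Longrightarrow> s < t + pi \<Longrightarrow> vec_angle (D s) (D t) \<le> s - t"
    by auto
  have sub: "{t..s} \<subseteq> I"
  proof
    fix x assume "x \<in> {t..s}"
    then have "t \<le> x" "x \<le> s" by auto
    then show "x \<in> I" using ivl[unfolded is_interval_1, rule_format, OF assms(2,3)] by blast
  qed
  have FT: "(D has_integral (\<gamma> s - \<gamma> t)) {t..s}"
  proof (rule fundamental_theorem_of_calculus)
    show "t \<le> s" using assms by simp
    fix x assume x: "x \<in> {t..s}"
    hence "(\<gamma> has_vector_derivative D x) (at x within I)"
      using dif[of x] sub unfolding D_def by (auto simp: vector_derivative_works)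
    thus "(\<gamma> has_vector_derivative D x) (at x within {t..s})"
      by (rule has_vector_derivative_within_subset[OF _ sub])
  qed
  define e where "e = D t"
  define C where "C = \<gamma> s - \<gamma> t"
  define p where "p = (s - t) / 2"
  have ne: "norm e = 1" using nrm assms(2) unfolding e_def by auto
  have pt: "\<And>u. u \<in> {t..s} \<Longrightarrow> norm (D u * cnj e) = 1 \<and> Re (D u * cnj e) \<ge> cos (u - t)"
  proof -
    fix u assume u: "u \<in> {t..s}"
    have nu: "norm (D u) = 1" using nrm sub u by auto
    have n1: "norm (D u * cnj e) = 1" using nu ne by (simp add: norm_mult)
    have re: "Re (D u * cnj e) = D u \<bullet> e" by (simp add: inner_complex_def)
    have "Re (D u * cnj e) \<ge> cos (u - t)"
    proof (cases "u = t")
      case True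
      have "D u * cnj e = of_real ((norm e)\<^sup>2)" using True unfolding e_def
        by (metis complex_norm_square of_real_power)
      thus ?thesis using ne True by simp
    next
      case False
      hence ut: "t < u" "u < t + pi" using u assms(5) by auto
      have "vec_angle (D u) e \<le> u - t"
        using ang[of t u, OF assms(2) subsetD[OF sub u]] ut unfolding e_def by auto
      hence ac: "arccos (D u \<bullet> e) \<le> u - t" unfolding vec_angle_def using nu ne by simp
      have cb: "\<bar>D u \<bullet> e\<bar> \<le> 1" using Cauchy_Schwarz_ineq2[of "D u" e] nu ne by simp
      hence cb1: "-1 \<le> D u \<bullet> e" "D u \<bullet> e \<le> 1" by auto
      have "cos (u - t) \<le> cos (arccos (D u \<bullet> e))"
        using cos_mono_le_eq[of "u - t" "arccos (D u \<bullet> e)"] ac ut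
          arccos_lbound[OF cb1] arccos_ubound[OF cb1] by auto
      thus ?thesis using re cb1 by simp
    qed
    thus "norm (D u * cnj e) = 1 \<and> Re (D u * cnj e) \<ge> cos (u - t)" using n1 by simp
  qed
  have p0: "0 < p" "2 * p < pi" "s - t - p = p" using assms(4,5) unfolding p_def by (auto simp: field_simps)
  have b1: "\<And>u. u \<in> {t..s} \<Longrightarrow> Im (D u * (cnj e * cis (- p))) \<le> sin (u - t - p)"
  proof -
    fix u assume u: "u \<in> {t..s}"
    have "Im ((D u * cnj e) * cis (- p)) \<le> sin ((u - t) - p)"
      using pt[OF u] u p0 unfolding p_def by (intro trig_aux(1)) auto
    thus "Im (D u * (cnj e * cis (- p))) \<le> sin (u - t - p)" by (simp add: mult.assoc)
  qed
  have b2: "\<And>u. u \<in> {t..s} \<Longrightarrow> - sin (u - t - p) \<le> Im (D u * (cnj e * cis p))"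
  proof -
    fix u assume u: "u \<in> {t..s}"
    have "Im ((D u * cnj e) * cis p) \<ge> - sin ((u - t) - p)"
      using pt[OF u] u p0 unfolding p_def by (intro trig_aux(2)) auto
    thus "- sin (u - t - p) \<le> Im (D u * (cnj e * cis p))" by (simp add: mult.assoc)
  qed
  have Is: "((\<lambda>u. sin (u - t - p)) has_integral 0) {t..s}"
    using integral_sin_shift[of t s p] p0 assms by simp
  have i1: "Im (C * (cnj e * cis (- p))) \<le> 0"
    using has_integral_le[OF integral_Im_mult[OF FT] Is b1] unfolding C_def by simp
  have i2: "0 \<le> Im (C * (cnj e * cis p))"
    using has_integral_le[OF has_integral_neg[OF Is] integral_Im_mult[OF FT] b2] unfolding C_def by simp
  have i3: "sin (s - t) \<le> Re (C * cnj e)"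
  proof -
    have "\<And>u. u \<in> {t..s} \<Longrightarrow> cos (u - t) \<le> Re (D u * cnj e)" using pt by blast
    from has_integral_le[OF integral_cos_shift[of t s] integral_Re_mult[OF FT, of "cnj e"] this]
    show ?thesis using assms(4) unfolding C_def by simp
  qed
  define w where "w = C * cnj e"
  define x where "x = Re w"
  define y where "y = Im w"
  have xpos: "0 < x" using i3 sin_gt_zero[of "s - t"] assms unfolding x_def w_def by auto
  have m1: "C * (cnj e * cis (- p)) = w * cis (- p)" unfolding w_def by (simp only: mult.assoc)
  have m2: "C * (cnj e * cis p) = w * cis p" unfolding w_def by (simp only: mult.assoc)
  have "Im (w * cis (- p)) = y * cos p - x * sin p" unfolding x_def y_def by simp
  hence e1: "y * cos p - x * sin p \<le> 0" using i1 m1 by simp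
  have "Im (w * cis p) = y * cos p + x * sin p" unfolding x_def y_def by simp
  hence e2: "0 \<le> y * cos p + x * sin p" using i2 m2 by simp
  have cp: "0 < cos p" using p0 by (intro cos_gt_zero_pi) auto
  have sp: "0 \<le> sin p" using p0 by (intro sin_ge_zero) auto
  have ya: "\<bar>y\<bar> * cos p \<le> x * sin p" using e1 e2 by (auto simp: abs_if algebra_simps)
  have "(\<bar>y\<bar> * cos p)\<^sup>2 \<le> (x * sin p)\<^sup>2"
    using ya cp by (intro power_mono) auto
  hence yy: "y\<^sup>2 * (cos p)\<^sup>2 \<le> x\<^sup>2 * (sin p)\<^sup>2" by (simp add: power_mult_distrib)
  have nw: "norm w = norm C" unfolding w_def using ne by (simp add: norm_mult)
  have nw2: "(norm w)\<^sup>2 = x\<^sup>2 + y\<^sup>2" unfolding x_def y_def by (simp add: cmod_power2)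
  have "(norm w * cos p)\<^sup>2 = x\<^sup>2 * (cos p)\<^sup>2 + y\<^sup>2 * (cos p)\<^sup>2"
    by (simp add: power_mult_distrib nw2 algebra_simps)
  also have "\<dots> \<le> x\<^sup>2 * (cos p)\<^sup>2 + x\<^sup>2 * (sin p)\<^sup>2" using yy by simp
  also have "\<dots> = x\<^sup>2" by (simp add: algebra_simps flip: distrib_left)
  finally have sq: "(norm w * cos p)\<^sup>2 \<le> x\<^sup>2" .
  have nwc: "norm w * cos p \<le> x" by (rule power2_le_imp_le[OF sq]) (use xpos in linarith)
  have xw: "x \<le> norm w" unfolding x_def by (rule complex_Re_le_cmod)
  have Cpos: "0 < norm C" using xw xpos nw by linarith
  have cle: "cos p \<le> x / norm C" using Cpos nwc nw by (simp add: pos_le_divide_eq mult.commute)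
  have xle: "x / norm C \<le> 1" using Cpos xw nw by (simp add: pos_divide_le_eq)
  have inner: "e \<bullet> C = x" unfolding x_def w_def by (simp add: inner_complex_def mult.commute)
  have "vec_angle e C = arccos (x / norm C)" unfolding vec_angle_def inner ne by simp
  also have "\<dots> \<le> arccos (cos p)"
    by (rule arccos_le_arccos) (use cle xle in auto)
  also have "\<dots> = p" using p0 by (intro arccos_cos) auto
  finally have "vec_angle e C \<le> p" .
  thus ?thesis unfolding e_def C_def p_def D_def .
qed

end
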